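(* For every $M\in\mathrm{Mat}_3(\mathbb C)$, $M^{\otimes d}=M\otimes M\otimes\cdots\otimes M\in\mathcal T$ (under the identification $\mathrm{Mat}_X(\mathbb C)=\mathrm{Mat}_3(\mathbb C)^{\otimes d}$ below).
   Context: Let $d\ge1$, $\mathbb F_3=\{0,1,2\}$ and $X=\mathbb F_3^d$. The Hamming digraph $H^*(d,3)$ has vertex set $X$, with an arc from $y$ to $z$ iff $y$ and $z$ differ in exactly one coordinate $i$ and $z_i=y_i+1$ in $\mathbb F_3$. Let $V=\mathbb C^X$ with basis $\{\hat y\}$. The adjacency matrix $A\in\mathrm{Mat}_X(\mathbb C)$ has $(y,z)$-entry $1$ iff there is an arc from $y$ to $z$. For integers $s,t$, $E^*_{[s,t]}$ is the diagonal matrix whose $(y,y)$-entry is $1$ if $y$ has exactly $s$ ones and $t$ twos, and $0$ otherwise. The Terwilliger algebra $\mathcal T$ is the subalgebra of $\mathrm{Mat}_X(\mathbb C)$ generated by $A$, $A^\top$ and all $E^*_{[s,t]}$. With $e_0,e_1,e_2$ the standard basis of $\mathbb C^3$, identify $V$ with $(\mathbb C^3)^{\otimes d}$ via $\hat y\mapsto e_{y_1}\otimes\cdots\otimes e_{y_d}$, and hence $\mathrm{Mat}_X(\mathbb C)$ with $\mathrm{Mat}_3(\mathbb C)^{\otimes d}$. *)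

theory Defs
  imports Main "HOL-Library.Complex_Order" Complex_Main
begin

definition verts :: "nat \<Rightarrow> nat list set" where
  "verts d = {y. length y = d \<and> set y \<subseteq> {0,1,2}}"

text \<open>Matrices indexed by X are functions X x X -> complex, taken to be 0 outside X x X.\<close>
type_synonym mat = "nat list \<Rightarrow> nat list \<Rightarrow> complex"

definition arc :: "nat \<Rightarrow> nat list \<Rightarrow> nat list \<Rightarrow> bool" where
  "arc d y z \<longleftrightarrow> y \<in> verts d \<and> z \<in> verts d \<and>
     (\<exists>i<d. z ! i = (y ! i + 1) mod 3 \<and> (\<forall>j<d. j \<noteq> i \<longrightarrow> z ! j = y ! j))"

definition adjA :: "nat \<Rightarrow> mat" where
  "adjA d = (\<lambda>y z. if arc d y z then 1 else 0)"

definition adjAT :: "nat \<Rightarrow> mat" where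
  "adjAT d = (\<lambda>y z. adjA d z y)"

definition Estar :: "nat \<Rightarrow> nat \<Rightarrow> nat \<Rightarrow> mat" where
  "Estar d s t = (\<lambda>y z. if y \<in> verts d \<and> z = y \<and> count_list y 1 = s \<and> count_list y 2 = t
                        then 1 else 0)"

definition idm :: "nat \<Rightarrow> mat" where
  "idm d = (\<lambda>y z. if y \<in> verts d \<and> z = y then 1 else 0)"

definition mmult :: "nat \<Rightarrow> mat \<Rightarrow> mat \<Rightarrow> mat" where
  "mmult d P Q = (\<lambda>y z. \<Sum>w\<in>verts d. P y w * Q w z)"

inductive_set terw :: "nat \<Rightarrow> mat set" for d :: nat where
  gen_A: "adjA d \<in> terw d"
| gen_AT: "adjAT d \<in> terw d"
| gen_E: "Estar d s t \<in> terw d"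
| gen_I: "idm d \<in> terw d"
| add: "P \<in> terw d \<Longrightarrow> Q \<in> terw d \<Longrightarrow> (\<lambda>y z. P y z + Q y z) \<in> terw d"
| smult: "P \<in> terw d \<Longrightarrow> (\<lambda>y z. c * P y z) \<in> terw d"
| mult: "P \<in> terw d \<Longrightarrow> Q \<in> terw d \<Longrightarrow> mmult d P Q \<in> terw d"

text \<open>M^{\<otimes>d} under the identification hat y = e_{y_1} \<otimes> ... \<otimes> e_{y_d};
  M is a 3x3 complex matrix with entries M i j for i, j in {0,1,2}.\<close>
definition tensor_pow :: "nat \<Rightarrow> (nat \<Rightarrow> nat \<Rightarrow> complex) \<Rightarrow> mat" where
  "tensor_pow d M = (\<lambda>y z. if y \<in> verts d \<and> z \<in> verts d
                           then (\<Prod>i<d. M (y ! i) (z ! i)) else 0)"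

end

theory Submission
  imports Defs
begin


lemma verts_nth: "Y \<in> verts d \<Longrightarrow> l < d \<Longrightarrow> Y ! l < 3"
  unfolding verts_def using nth_mem by fastforce

lemma finite_verts: "finite (verts d)"
proof -
  have "verts d = {xs. set xs \<subseteq> {0,1,2} \<and> length xs = d}" unfolding verts_def by auto
  thus ?thesis using finite_lists_length_eq[of "{0::nat,1,2}" d] by simp
qed

lemma verts_Suc: "verts (Suc d) = (\<lambda>(k,w). k # w) ` ({..<3} \<times> verts d)"
proof (rule set_eqI, rule iffI)
  fix y assume "y \<in> verts (Suc d)"
  then obtain k w where "y = k # w" "length w = d" "set (k#w) \<subseteq> {0,1,2}"
    unfolding verts_def by (cases y) auto
  thus "y \<in> (\<lambda>(k,w). k # w) ` ({..<3} \<times> verts d)"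
    unfolding verts_def by (auto intro!: image_eqI[of _ _ "(k,w)"])
qed (auto simp: verts_def)

lemma sum_verts_prod:
  "(\<Sum>w\<in>verts d. \<Prod>i<d. f i (w ! i)) = (\<Prod>i<d. \<Sum>k<3. (f i k :: complex))"
proof (induction d arbitrary: f)
  case 0
  have "verts 0 = {[]}" unfolding verts_def by auto
  thus ?case by simp
next
  case (Suc d)
  have inj: "inj_on (\<lambda>(k,w). k # w) ({..<3::nat} \<times> verts d)" by (auto simp: inj_on_def)
  have "(\<Sum>w\<in>verts (Suc d). \<Prod>i<Suc d. f i (w ! i))
      = (\<Sum>x\<in>{..<3} \<times> verts d. (\<lambda>w. \<Prod>i<Suc d. f i (w ! i)) ((\<lambda>(k,w). k # w) x))"
    unfolding verts_Suc by (simp add: sum.reindex[OF inj] comp_def)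
  also have "\<dots> = (\<Sum>k<3. \<Sum>w\<in>verts d. f 0 k * (\<Prod>i<d. f (Suc i) (w ! i)))"
    by (simp add: sum.cartesian_product case_prod_beta prod.lessThan_Suc_shift del: prod.lessThan_Suc)
  also have "\<dots> = (\<Sum>k<3. f 0 k * (\<Prod>i<d. \<Sum>k<3. f (Suc i) k))"
    using Suc.IH[of "\<lambda>i. f (Suc i)"] by (simp add: sum_distrib_left[symmetric])
  also have "\<dots> = (\<Prod>i<Suc d. \<Sum>k<3. f i k)"
    by (simp add: prod.lessThan_Suc_shift sum_distrib_right del: prod.lessThan_Suc)
  finally show ?case .
qed

definition I3 :: "nat \<Rightarrow> nat \<Rightarrow> complex" where "I3 = (\<lambda>i j. if i = j then 1 else 0)"
definition m3 :: "(nat \<Rightarrow> nat \<Rightarrow> complex) \<Rightarrow> (nat \<Rightarrow> nat \<Rightarrow> complex) \<Rightarrow> nat \<Rightarrow> nat \<Rightarrow> complex"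
  where "m3 x y = (\<lambda>i j. \<Sum>k<3. x i k * y k j)"
definition Tn :: "nat \<Rightarrow> (nat \<Rightarrow> nat \<Rightarrow> nat \<Rightarrow> complex) \<Rightarrow> mat" where
  "Tn d c = (\<lambda>y z. if y \<in> verts d \<and> z \<in> verts d then \<Prod>i<d. c i (y ! i) (z ! i) else 0)"

lemma Tn_cong: "(\<And>l p q. l < d \<Longrightarrow> p < 3 \<Longrightarrow> q < 3 \<Longrightarrow> c l p q = c' l p q) \<Longrightarrow> Tn d c = Tn d c'"
  unfolding Tn_def by (intro ext) (auto intro!: prod.cong simp: verts_nth)

lemma Tn_mult: "mmult d (Tn d c) (Tn d c') = Tn d (\<lambda>l. m3 (c l) (c' l))"
proof (intro ext)
  fix y z
  show "mmult d (Tn d c) (Tn d c') y z = Tn d (\<lambda>l. m3 (c l) (c' l)) y z"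
  proof (cases "y \<in> verts d \<and> z \<in> verts d")
    case True
    have "mmult d (Tn d c) (Tn d c') y z = (\<Sum>w\<in>verts d. \<Prod>i<d. c i (y!i) (w!i) * c' i (w!i) (z!i))"
      unfolding mmult_def Tn_def using True by (simp add: prod.distrib)
    also have "\<dots> = (\<Prod>i<d. \<Sum>k<3. c i (y!i) k * c' i k (z!i))"
      by (rule sum_verts_prod)
    finally show ?thesis using True by (simp add: Tn_def m3_def)
  qed (auto simp: mmult_def Tn_def)
qed



lemma terw_zero: "(\<lambda>y z. 0) \<in> terw d"
  using terw.smult[OF terw.gen_I, where c=0 and d=d] by simp

lemma terw_lin: "P \<in> terw d \<Longrightarrow> Q \<in> terw d \<Longrightarrow> (\<lambda>y z. a * P y z + b * Q y z) \<in> terw d"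
  by (intro terw.add terw.smult)

lemma terw_sum: "finite A \<Longrightarrow> (\<And>x. x \<in> A \<Longrightarrow> f x \<in> terw d) \<Longrightarrow> (\<lambda>y z. \<Sum>x\<in>A. f x y z) \<in> terw d"
proof (induction A rule: finite_induct)
  case empty thus ?case using terw_zero by simp
next
  case (insert x F)
  have "(\<lambda>y z. f x y z + (\<lambda>y z. \<Sum>x\<in>F. f x y z) y z) \<in> terw d"
    using insert by (intro terw.add) auto
  thus ?case using insert by simp
qed

lemma terw_cong: "P \<in> terw d \<Longrightarrow> (\<And>y z. P y z = Q y z) \<Longrightarrow> Q \<in> terw d"
proof -
  assume "P \<in> terw d" "\<And>y z. P y z = Q y z"
  then have "P = Q" by (intro ext) auto
  thus ?thesis using \<open>P \<in> terw d\<close> by simp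
qed

definition loc :: "nat \<Rightarrow> (nat \<Rightarrow> nat \<Rightarrow> complex) \<Rightarrow> nat \<Rightarrow> nat \<Rightarrow> nat \<Rightarrow> complex" where
  "loc i b = (\<lambda>l. if l = i then b else I3)"
definition Dl :: "nat \<Rightarrow> (nat \<Rightarrow> nat \<Rightarrow> complex) \<Rightarrow> mat" where
  "Dl d b = (\<lambda>y z. \<Sum>i<d. Tn d (loc i b) y z)"
definition R :: "nat \<Rightarrow> nat \<Rightarrow> nat list \<Rightarrow> nat list \<Rightarrow> complex" where
  "R d i y z = (\<Prod>l\<in>{..<d}-{i}. I3 (y!l) (z!l))"

lemma prod_boole: "finite A \<Longrightarrow> (\<Prod>x\<in>A. if Q x then 1 else 0) = (if \<forall>x\<in>A. Q x then 1 else (0::complex))"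
  by (induction A rule: finite_induct) auto

lemma R_eq: "R d i y z = (if \<forall>l\<in>{..<d}-{i}. y!l = z!l then 1 else 0)"
  unfolding R_def I3_def by (rule prod_boole) auto

lemma Tn_loc: "i < d \<Longrightarrow> Tn d (loc i b) y z =
   (if y \<in> verts d \<and> z \<in> verts d then b (y!i) (z!i) * R d i y z else 0)"
  unfolding Tn_def R_def
  by (simp add: prod.remove[of "{..<d}" i] loc_def)

lemma Dl_eq: "Dl d b y z = (if y \<in> verts d \<and> z \<in> verts d then (\<Sum>i<d. b (y!i) (z!i) * R d i y z) else 0)"
  unfolding Dl_def by (cases "y \<in> verts d \<and> z \<in> verts d") (auto simp add: Tn_loc)

lemma Dl_lin: "Dl d (\<lambda>p q. a * x p q + b * w p q) y z = a * Dl d x y z + b * Dl d w y z"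
  unfolding Dl_eq by (simp add: sum.distrib sum_distrib_left algebra_simps)

lemma Dl_sum: "Dl d (\<lambda>p q. \<Sum>x\<in>A. f x p q) y z = (\<Sum>x\<in>A. Dl d (f x) y z)"
  unfolding Dl_eq by (cases "y \<in> verts d \<and> z \<in> verts d") (auto simp add: sum_distrib_right sum.swap[of _ "{..<d}"])

definition L :: "nat \<Rightarrow> (nat \<Rightarrow> nat \<Rightarrow> complex) set" where "L d = {b. Dl d b \<in> terw d}"

lemma L_lin: "x \<in> L d \<Longrightarrow> w \<in> L d \<Longrightarrow> (\<lambda>p q. a * x p q + b * w p q) \<in> L d"
  unfolding L_def mem_Collect_eq
  by (rule terw_cong[OF terw_lin[of "Dl d x" d "Dl d w" a b]]) (simp_all add: Dl_lin)

lemma L_sum: "finite A \<Longrightarrow> (\<And>x. x \<in> A \<Longrightarrow> f x \<in> L d) \<Longrightarrow> (\<lambda>p q. \<Sum>x\<in>A. f x p q) \<in> L d"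
  unfolding L_def mem_Collect_eq
  by (rule terw_cong[OF terw_sum[of A "\<lambda>x. Dl d (f x)" d]]) (simp_all add: Dl_sum)

lemma Dl_cong: "(\<And>p q. p < 3 \<Longrightarrow> q < 3 \<Longrightarrow> x p q = w p q) \<Longrightarrow> Dl d x = Dl d w"
  by (intro ext, simp only: Dl_eq) (auto intro!: sum.cong simp: verts_nth)

lemma L_cong: "x \<in> L d \<Longrightarrow> (\<And>p q. p < 3 \<Longrightarrow> q < 3 \<Longrightarrow> x p q = w p q) \<Longrightarrow> w \<in> L d"
  unfolding L_def using Dl_cong[of x w d] by simp

lemma sum3: "(\<Sum>k<(3::nat). f k) = f 0 + f 1 + (f 2 :: complex)"
  by (simp add: numeral_3_eq_3 numeral_2_eq_2 add.commute add.left_commute)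
lemma less3: "(p::nat) < 3 \<longleftrightarrow> p = 0 \<or> p = 1 \<or> p = 2" by auto

lemma m3_I3_left: "p < 3 \<Longrightarrow> m3 I3 x p q = x p q"
  unfolding m3_def I3_def sum3 less3 by auto
lemma m3_I3_right: "q < 3 \<Longrightarrow> m3 x I3 p q = x p q"
  unfolding m3_def I3_def sum3 less3 by auto



lemma mmult_sums: "mmult d (\<lambda>y z. \<Sum>x\<in>A. F x y z) (\<lambda>y z. \<Sum>u\<in>B. H u y z) y z
   = (\<Sum>x\<in>A. \<Sum>u\<in>B. mmult d (F x) (H u) y z)"
  unfolding mmult_def sum_product
  by (subst sum.swap, rule sum.cong[OF refl], rule sum.swap)

lemma Dl_comm: "mmult d (Dl d x) (Dl d w) y z - mmult d (Dl d w) (Dl d x) y z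
   = Dl d (m3 x w) y z - Dl d (m3 w x) y z"
proof -
  define F where "F x w i j = Tn d (\<lambda>l. m3 (loc i x l) (loc j w l)) y z" for x w i j
  have one: "mmult d (Dl d x) (Dl d w) y z = (\<Sum>i<d. \<Sum>j<d. F x w i j)" for x w
    unfolding Dl_def mmult_sums Tn_mult F_def ..
  have sw: "F x w i j = F w x j i" if "i \<noteq> j" for i j
    unfolding F_def
    by (rule arg_cong[where f="\<lambda>T. T y z"], rule Tn_cong) (use that in \<open>auto simp: loc_def m3_I3_left m3_I3_right\<close>)
  have dg: "F x w i i = Tn d (loc i (m3 x w)) y z" "F w x i i = Tn d (loc i (m3 w x)) y z" for i
    unfolding F_def
    by (rule arg_cong[where f="\<lambda>T. T y z"], rule Tn_cong, auto simp: loc_def m3_I3_left)+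
  have "mmult d (Dl d x) (Dl d w) y z - mmult d (Dl d w) (Dl d x) y z
      = (\<Sum>i<d. \<Sum>j<d. F x w i j) - (\<Sum>i<d. \<Sum>j<d. F w x j i)"
    unfolding one by (subst sum.swap[of _ "{..<d}" "{..<d}"]) simp
  also have "\<dots> = (\<Sum>i<d. \<Sum>j<d. F x w i j - F w x j i)"
    by (simp only: sum_subtractf)
  also have "\<dots> = (\<Sum>i<d. F x w i i - F w x i i)"
  proof (rule sum.cong[OF refl])
    fix i assume "i \<in> {..<d}"
    have "(\<Sum>j<d. F x w i j - F w x j i) = (F x w i i - F w x i i) + (\<Sum>j\<in>{..<d}-{i}. F x w i j - F w x j i)"
      using \<open>i \<in> {..<d}\<close> by (simp add: sum.remove)
    also have "(\<Sum>j\<in>{..<d}-{i}. F x w i j - F w x j i) = 0"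
      by (rule sum.neutral) (auto simp: sw)
    finally show "(\<Sum>j<d. F x w i j - F w x j i) = F x w i i - F w x i i" by simp
  qed
  also have "\<dots> = Dl d (m3 x w) y z - Dl d (m3 w x) y z"
    unfolding Dl_def dg by (simp add: sum_subtractf)
  finally show ?thesis .
qed

lemma L_brk: "x \<in> L d \<Longrightarrow> w \<in> L d \<Longrightarrow> (\<lambda>p q. m3 x w p q - m3 w x p q) \<in> L d"
proof -
  assume "x \<in> L d" "w \<in> L d"
  hence "(\<lambda>y z. 1 * mmult d (Dl d x) (Dl d w) y z + (-1) * mmult d (Dl d w) (Dl d x) y z) \<in> terw d"
    unfolding L_def by (intro terw_lin terw.mult) auto
  thus ?thesis unfolding L_def mem_Collect_eq
    by (rule terw_cong) (use Dl_comm[of d x w] Dl_lin[where a=1 and b="-1" and x="m3 x w" and w="m3 w x"] in simp)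
qed



lemma count_sum: "of_nat (count_list ys a) = (\<Sum>i<length ys. if ys!i = a then 1 else 0 :: complex)"
proof (induction ys)
  case (Cons x xs)
  have "(\<Sum>i<length (x#xs). if (x#xs)!i = a then 1 else 0 :: complex)
      = (if x = a then 1 else 0) + (\<Sum>i<length xs. if xs!i = a then 1 else 0)"
    by (subst length_Cons, subst sum.lessThan_Suc_shift) simp
  then show ?case using Cons by simp
qed simp

lemma count012: "set (ys::nat list) \<subseteq> {0,1,2} \<Longrightarrow> count_list ys 0 + count_list ys 1 + count_list ys 2 = length ys"
  by (induction ys) auto

definition E :: "nat \<Rightarrow> nat \<Rightarrow> nat \<Rightarrow> nat \<Rightarrow> complex" where
  "E r s = (\<lambda>p q. if p = r \<and> q = s then 1 else 0)"

lemma verts_eq: "Y \<in> verts d \<Longrightarrow> Z \<in> verts d \<Longrightarrow> (\<forall>l<d. Y!l = Z!l) \<Longrightarrow> Y = Z"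
  unfolding verts_def by (auto intro: nth_equalityI)

lemma Dl_Eaa: "Y \<in> verts d \<Longrightarrow> Z \<in> verts d \<Longrightarrow>
   Dl d (E a a) Y Z = (if Y = Z then of_nat (count_list Y a) else 0)"
proof -
  assume Y: "Y \<in> verts d" and Z: "Z \<in> verts d"
  show ?thesis
  proof (cases "Y = Z")
    case True
    have "length Y = d" using Y by (simp add: verts_def)
    thus ?thesis using Y True by (simp add: Dl_eq R_eq E_def count_sum)
  next
    case False
    have "(\<Sum>i<d. E a a (Y!i) (Z!i) * R d i Y Z) = 0"
    proof (rule sum.neutral, rule ballI)
      fix i assume i: "i \<in> {..<d}"
      show "E a a (Y!i) (Z!i) * R d i Y Z = 0"
      proof (rule ccontr)
        assume "E a a (Y!i) (Z!i) * R d i Y Z \<noteq> 0"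
        hence "Y!i = a" "Z!i = a" "\<forall>l\<in>{..<d}-{i}. Y!l = Z!l"
          by (auto simp: E_def R_eq split: if_splits)
        hence "\<forall>l<d. Y!l = Z!l" by (metis Diff_iff lessThan_iff singletonD)
        thus False using verts_eq[OF Y Z] False by simp
      qed
    qed
    thus ?thesis using Y Z False by (simp add: Dl_eq)
  qed
qed

lemma Esum: "(\<Sum>s\<le>d. \<Sum>t\<le>d. f s t * Estar d s t Y Z) =
   (if Y \<in> verts d \<and> Z = Y then f (count_list Y 1) (count_list Y 2) else 0)"
proof (cases "Y \<in> verts d \<and> Z = Y")
  case True
  hence len: "length Y = d" by (simp add: verts_def)
  have e: "f s t * Estar d s t Y Z = (if s = count_list Y 1 then (if t = count_list Y 2 then f s t else 0) else 0)" for s t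
    using True by (auto simp: Estar_def)
  have "(\<Sum>s\<le>d. \<Sum>t\<le>d. f s t * Estar d s t Y Z) =
        (\<Sum>s\<le>d. if s = count_list Y 1 then (\<Sum>t\<le>d. if t = count_list Y 2 then f s t else 0) else 0)"
    by (simp only: e) (intro sum.cong refl, simp)
  also have "\<dots> = f (count_list Y 1) (count_list Y 2)"
    using count_le_length[of Y 1] count_le_length[of Y 2] len by (simp add: sum.delta)
  finally show ?thesis using True by simp
qed (auto simp: Estar_def)

lemma L_diag:
  assumes "\<And>Y. Y \<in> verts d \<Longrightarrow> Dl d b Y Y = f (count_list Y 1) (count_list Y 2)"
    and "\<And>Y Z. Y \<noteq> Z \<Longrightarrow> Dl d b Y Z = 0"
  shows "b \<in> L d"
proof -
  have "(\<lambda>Y Z. \<Sum>s\<le>d. (\<lambda>s Y Z. \<Sum>t\<le>d. (\<lambda>t Y Z. f s t * Estar d s t Y Z) t Y Z) s Y Z) \<in> terw d"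
    by (intro terw_sum terw.smult terw.gen_E) auto
  thus ?thesis unfolding L_def mem_Collect_eq
  proof (rule terw_cong)
    fix Y Z
    show "(\<Sum>s\<le>d. \<Sum>t\<le>d. f s t * Estar d s t Y Z) = Dl d b Y Z"
      unfolding Esum using assms by (cases "Y = Z") (auto simp: Dl_eq)
  qed
qed

lemma E00_L: "E 0 0 \<in> L d"
proof (rule L_diag[where f="\<lambda>s t. of_nat (d - s - t)"])
  fix Y assume Y: "Y \<in> verts d"
  hence "count_list Y 0 = d - count_list Y 1 - count_list Y 2"
    using count012[of Y] by (simp add: verts_def)
  thus "Dl d (E 0 0) Y Y = of_nat (d - count_list Y 1 - count_list Y 2)"
    using Dl_Eaa[OF Y Y] by simp
next
  fix Y Z :: "nat list" assume "Y \<noteq> Z"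
  thus "Dl d (E 0 0) Y Z = 0" using Dl_Eaa[of Y d Z 0] by (auto simp: Dl_eq)
qed

lemma E11_L: "E 1 1 \<in> L d"
proof (rule L_diag[where f="\<lambda>s t. of_nat s"])
  fix Y assume Y: "Y \<in> verts d"
  show "Dl d (E 1 1) Y Y = of_nat (count_list Y 1)" using Dl_Eaa[OF Y Y, of 1] by simp
next
  fix Y Z :: "nat list" assume "Y \<noteq> Z"
  thus "Dl d (E 1 1) Y Z = 0" using Dl_Eaa[of Y d Z 1] by (auto simp: Dl_eq)
qed

lemma E22_L: "E 2 2 \<in> L d"
proof (rule L_diag[where f="\<lambda>s t. of_nat t"])
  fix Y assume Y: "Y \<in> verts d"
  show "Dl d (E 2 2) Y Y = of_nat (count_list Y 2)" using Dl_Eaa[OF Y Y, of 2] by simp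
next
  fix Y Z :: "nat list" assume "Y \<noteq> Z"
  thus "Dl d (E 2 2) Y Z = 0" using Dl_Eaa[of Y d Z 2] by (auto simp: Dl_eq)
qed



definition Pm :: "nat \<Rightarrow> nat \<Rightarrow> complex" where
  "Pm = (\<lambda>p q. if p < 3 \<and> q = (p + 1) mod 3 then 1 else 0)"

lemma mod_ne: "(x + 1) mod 3 \<noteq> (x::nat)" by presburger

lemma A_eq: "adjA d Y Z = Dl d Pm Y Z"
proof (cases "Y \<in> verts d \<and> Z \<in> verts d")
  case False thus ?thesis by (auto simp: adjA_def arc_def Dl_eq)
next
  case True
  hence Y: "Y \<in> verts d" and Z: "Z \<in> verts d" by auto
  define Q where "Q i \<longleftrightarrow> Z!i = (Y!i + 1) mod 3 \<and> (\<forall>l\<in>{..<d}-{i}. Y!l = Z!l)" for i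
  have trm: "Pm (Y!i) (Z!i) * R d i Y Z = (if Q i then 1 else 0)" if "i < d" for i
    using verts_nth[OF Y that] by (auto simp: Pm_def R_eq Q_def)
  have uniq: "i = j" if "Q i" "Q j" "i < d" "j < d" for i j
  proof (rule ccontr)
    assume "i \<noteq> j"
    hence "Y!j = Z!j" using that(1) \<open>j < d\<close> by (auto simp: Q_def)
    thus False using that(2) mod_ne[of "Y!j"] by (simp add: Q_def)
  qed
  have arcQ: "arc d Y Z \<longleftrightarrow> (\<exists>i<d. Q i)"
  proof
    assume "arc d Y Z"
    then obtain i where "i < d" "Z ! i = (Y ! i + 1) mod 3" "\<forall>j<d. j \<noteq> i \<longrightarrow> Z ! j = Y ! j"
      unfolding arc_def by blast
    thus "\<exists>i<d. Q i" unfolding Q_def by (intro exI[of _ i]) auto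
  next
    assume "\<exists>i<d. Q i"
    thus "arc d Y Z" using Y Z unfolding arc_def Q_def by fastforce
  qed
  have "Dl d Pm Y Z = (\<Sum>i<d. if Q i then 1 else 0)"
    using True by (simp add: Dl_eq trm)
  also have "\<dots> = (if \<exists>i<d. Q i then 1 else 0)"
  proof (cases "\<exists>i<d. Q i")
    case True
    then obtain i where i: "i < d" "Q i" by auto
    have "(\<Sum>i<d. if Q i then 1 else 0 :: complex) = 1 + (\<Sum>j\<in>{..<d}-{i}. if Q j then 1 else 0)"
      using i by (simp add: sum.remove)
    also have "(\<Sum>j\<in>{..<d}-{i}. if Q j then 1 else 0 :: complex) = 0"
      by (rule sum.neutral) (use uniq i in auto)
    finally show ?thesis using True by simp
  qed auto
  finally show ?thesis by (simp add: adjA_def arcQ)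
qed

lemma R_sym: "R d i Z Y = R d i Y Z"
  unfolding R_eq by auto

lemma P_L: "Pm \<in> L d"
proof -
  have "adjA d = Dl d Pm" using A_eq by (intro ext) auto
  thus ?thesis unfolding L_def using terw.gen_A[of d] by simp
qed

lemma PT_L: "(\<lambda>p q. Pm q p) \<in> L d"
proof -
  have "adjAT d = Dl d (\<lambda>p q. Pm q p)"
    by (intro ext) (auto simp: adjAT_def A_eq Dl_eq R_sym)
  thus ?thesis unfolding L_def using terw.gen_AT[of d] by simp
qed

definition brk where "brk x w = (\<lambda>p q. m3 x w p q - m3 w x p q)"

lemma L_brk': "x \<in> L d \<Longrightarrow> w \<in> L d \<Longrightarrow> brk x w \<in> L d"
  unfolding brk_def by (rule L_brk)

lemma L_half: "x \<in> L d \<Longrightarrow> w \<in> L d \<Longrightarrow>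
   (\<And>p q. p < 3 \<Longrightarrow> q < 3 \<Longrightarrow> v p q = a * x p q + b * w p q) \<Longrightarrow> v \<in> L d"
  by (rule L_cong[OF L_lin]) auto

lemma nd3: "\<not> (3::nat) dvd Suc (Suc 0)" "\<not> (3::nat) dvd Suc 0" by presburger+

lemma Pm_alt: "Pm p q = (if p = 0 \<and> q = 1 \<or> p = 1 \<and> q = 2 \<or> p = 2 \<and> q = 0 then 1 else 0)"
  unfolding Pm_def less3 by (auto simp: mod_Suc)

lemmas evs = brk_def m3_def sum3 E_def Pm_alt

lemma E01_L: "E 0 1 \<in> L d"
  by (rule L_half[OF L_brk'[OF E00_L P_L] L_brk'[OF E00_L L_brk'[OF E00_L P_L]], where a="1/2" and b="1/2"])
     (unfold less3, (elim disjE; simp add: evs))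

lemma E20_L: "E 2 0 \<in> L d"
  by (rule L_half[OF L_brk'[OF E00_L P_L] L_brk'[OF E00_L L_brk'[OF E00_L P_L]], where a="-1/2" and b="1/2"])
     (unfold less3, (elim disjE; simp add: evs))

lemma E12_L: "E 1 2 \<in> L d"
  by (rule L_half[OF L_brk'[OF E11_L P_L] L_brk'[OF E11_L L_brk'[OF E11_L P_L]], where a="1/2" and b="1/2"])
     (unfold less3, (elim disjE; simp add: evs))

lemma E02_L: "E 0 2 \<in> L d"
  by (rule L_half[OF L_brk'[OF E00_L PT_L] L_brk'[OF E00_L L_brk'[OF E00_L PT_L]], where a="1/2" and b="1/2"])
     (unfold less3, (elim disjE; simp add: evs))

lemma E10_L: "E 1 0 \<in> L d"
  by (rule L_half[OF L_brk'[OF E00_L PT_L] L_brk'[OF E00_L L_brk'[OF E00_L PT_L]], where a="-1/2" and b="1/2"])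
     (unfold less3, (elim disjE; simp add: evs))

lemma E21_L: "E 2 1 \<in> L d"
  by (rule L_half[OF L_brk'[OF E11_L PT_L] L_brk'[OF E11_L L_brk'[OF E11_L PT_L]], where a="-1/2" and b="1/2"])
     (unfold less3, (elim disjE; simp add: evs))

lemma E_L: "r < 3 \<Longrightarrow> s < 3 \<Longrightarrow> E r s \<in> L d"
  unfolding less3 using E00_L E01_L E02_L E10_L E11_L E12_L E20_L E21_L E22_L by auto

lemma L_all: "b \<in> L d"
proof -
  have "(\<lambda>p q. \<Sum>r<3. (\<lambda>r p q. \<Sum>s<3. (\<lambda>s p q. b r s * E r s p q) s p q) r p q) \<in> L d"
  proof (intro L_sum)
    fix r s :: nat assume "r \<in> {..<3}" "s \<in> {..<3}"
    hence Ers: "E r s \<in> L d" by (intro E_L) auto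
    show "(\<lambda>p q. b r s * E r s p q) \<in> L d"
      by (rule L_half[OF Ers Ers, where a="b r s" and b=0]) auto
  qed auto
  thus ?thesis by (rule L_cong) (auto simp: sum3 E_def less3)
qed



definition Pk :: "nat \<Rightarrow> nat \<Rightarrow> nat set set" where "Pk d k = {S. S \<subseteq> {..<d} \<and> card S = k}"

lemma finite_Pk: "finite (Pk d k)"
  by (rule finite_subset[of _ "Pow {..<d}"]) (auto simp: Pk_def)

lemma Pk_fin: "S \<in> Pk d k \<Longrightarrow> finite S"
  unfolding Pk_def using finite_subset by blast

lemma reindex: "(\<Sum>S\<in>Pk d (Suc m). \<Sum>i\<in>S. g S i) = (\<Sum>S\<in>Pk d m. \<Sum>i\<in>{..<d}-S. (g (insert i S) i :: complex))"
proof -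
  have bij: "bij_betw (\<lambda>(S,i). (insert i S, i)) (Sigma (Pk d m) (\<lambda>S. {..<d}-S)) (Sigma (Pk d (Suc m)) (\<lambda>S. S))"
  proof (rule bij_betw_byWitness[where f'="\<lambda>(S,i). (S - {i}, i)"])
    show "\<forall>a\<in>Sigma (Pk d m) (\<lambda>S. {..<d}-S). (\<lambda>(S,i). (S - {i}, i)) ((\<lambda>(S,i). (insert i S, i)) a) = a"
      by auto
    show "\<forall>a\<in>Sigma (Pk d (Suc m)) (\<lambda>S. S). (\<lambda>(S,i). (insert i S, i)) ((\<lambda>(S,i). (S - {i}, i)) a) = a"
      by auto
    show "(\<lambda>(S,i). (insert i S, i)) ` Sigma (Pk d m) (\<lambda>S. {..<d}-S) \<subseteq> Sigma (Pk d (Suc m)) (\<lambda>S. S)"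
      using Pk_fin by (auto simp: Pk_def)
    show "(\<lambda>(S,i). (S - {i}, i)) ` Sigma (Pk d (Suc m)) (\<lambda>S. S) \<subseteq> Sigma (Pk d m) (\<lambda>S. {..<d}-S)"
      using Pk_fin by (fastforce simp: Pk_def)
  qed
  have fin2: "\<And>S. S \<in> Pk d (Suc m) \<Longrightarrow> finite S" using Pk_fin by blast
  have "(\<Sum>S\<in>Pk d m. \<Sum>i\<in>{..<d}-S. g (insert i S) i) = (\<Sum>(S,i)\<in>Sigma (Pk d m) (\<lambda>S. {..<d}-S). g (insert i S) i)"
    by (rule sum.Sigma) (auto simp: finite_Pk)
  also have "\<dots> = (\<Sum>x\<in>Sigma (Pk d m) (\<lambda>S. {..<d}-S). (\<lambda>(S,i). g S i) ((\<lambda>(S,i). (insert i S, i)) x))"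
    by (rule sum.cong) auto
  also have "\<dots> = (\<Sum>(S,i)\<in>Sigma (Pk d (Suc m)) (\<lambda>S. S). g S i)"
    by (rule sum.reindex_bij_betw[OF bij])
  also have "\<dots> = (\<Sum>S\<in>Pk d (Suc m). \<Sum>i\<in>S. g S i)"
    by (rule sum.Sigma[symmetric]) (auto simp: finite_Pk fin2)
  finally show ?thesis by simp
qed

fun m3pow :: "(nat \<Rightarrow> nat \<Rightarrow> complex) \<Rightarrow> nat \<Rightarrow> nat \<Rightarrow> nat \<Rightarrow> complex" where
  "m3pow a 0 = I3" | "m3pow a (Suc n) = m3 a (m3pow a n)"

definition V where "V a S = (\<lambda>l. if l \<in> S then a else I3)"
definition W where "W a S i j = (\<lambda>l. if l = i then m3pow a j else if l \<in> S then a else I3)"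
definition ek :: "nat \<Rightarrow> _ \<Rightarrow> nat \<Rightarrow> mat" where
  "ek d a k = (\<lambda>Y Z. \<Sum>S\<in>Pk d k. Tn d (V a S) Y Z)"
definition Gk :: "nat \<Rightarrow> _ \<Rightarrow> nat \<Rightarrow> nat \<Rightarrow> mat" where
  "Gk d a k j = (\<lambda>Y Z. \<Sum>S\<in>Pk d k. \<Sum>i\<in>{..<d}-S. Tn d (W a S i j) Y Z)"

lemma claimA: "Gk d a m 1 Y Z = of_nat (Suc m) * ek d a (Suc m) Y Z"
proof -
  have tn: "Tn d (W a S i 1) = Tn d (V a (insert i S))" for S i
    by (rule Tn_cong) (auto simp: W_def V_def m3_I3_right)
  have "Gk d a m 1 Y Z = (\<Sum>S\<in>Pk d m. \<Sum>i\<in>{..<d}-S. Tn d (V a (insert i S)) Y Z)"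
    unfolding Gk_def tn ..
  also have "\<dots> = (\<Sum>S\<in>Pk d (Suc m). \<Sum>i\<in>S. Tn d (V a S) Y Z)"
    by (rule reindex[symmetric])
  also have "\<dots> = (\<Sum>S\<in>Pk d (Suc m). of_nat (Suc m) * Tn d (V a S) Y Z)"
    by (intro sum.cong refl) (simp add: Pk_def)
  finally show ?thesis by (simp add: ek_def sum_distrib_left)
qed

lemma claimB: "mmult d (ek d a (Suc m)) (Dl d (m3pow a j)) Y Z = Gk d a (Suc m) j Y Z + Gk d a m (Suc j) Y Z"
proof -
  define T where "T S i = Tn d (\<lambda>l. m3 (V a S l) (loc i (m3pow a j) l)) Y Z" for S i
  have "mmult d (ek d a (Suc m)) (Dl d (m3pow a j)) Y Z = (\<Sum>S\<in>Pk d (Suc m). \<Sum>i<d. T S i)"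
    unfolding ek_def Dl_def mmult_sums Tn_mult T_def ..
  also have "\<dots> = (\<Sum>S\<in>Pk d (Suc m). (\<Sum>i\<in>{..<d}-S. Tn d (W a S i j) Y Z) + (\<Sum>i\<in>S. Tn d (W a (S-{i}) i (Suc j)) Y Z))"
  proof (rule sum.cong[OF refl])
    fix S assume S: "S \<in> Pk d (Suc m)"
    hence sub: "S \<subseteq> {..<d}" by (simp add: Pk_def)
    have "(\<Sum>i<d. T S i) = (\<Sum>i\<in>{..<d}-S. T S i) + (\<Sum>i\<in>S. T S i)"
      by (rule sum.subset_diff[OF sub]) simp
    also have "(\<Sum>i\<in>{..<d}-S. T S i) = (\<Sum>i\<in>{..<d}-S. Tn d (W a S i j) Y Z)"
      unfolding T_def
    proof (intro sum.cong refl)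
      fix i assume "i \<in> {..<d}-S"
      hence "Tn d (\<lambda>l. m3 (V a S l) (loc i (m3pow a j) l)) = Tn d (W a S i j)"
        by (intro Tn_cong) (auto simp: W_def V_def loc_def m3_I3_right m3_I3_left)
      thus "Tn d (\<lambda>l. m3 (V a S l) (loc i (m3pow a j) l)) Y Z = Tn d (W a S i j) Y Z" by simp
    qed
    also have "(\<Sum>i\<in>S. T S i) = (\<Sum>i\<in>S. Tn d (W a (S-{i}) i (Suc j)) Y Z)"
      unfolding T_def
    proof (intro sum.cong refl)
      fix i assume "i \<in> S"
      hence "Tn d (\<lambda>l. m3 (V a S l) (loc i (m3pow a j) l)) = Tn d (W a (S-{i}) i (Suc j))"
        by (intro Tn_cong) (auto simp: W_def V_def loc_def m3_I3_right)
      thus "Tn d (\<lambda>l. m3 (V a S l) (loc i (m3pow a j) l)) Y Z = Tn d (W a (S-{i}) i (Suc j)) Y Z" by simp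
    qed
    finally show "(\<Sum>i<d. T S i) = (\<Sum>i\<in>{..<d}-S. Tn d (W a S i j) Y Z) + (\<Sum>i\<in>S. Tn d (W a (S-{i}) i (Suc j)) Y Z)" .
  qed
  also have "\<dots> = Gk d a (Suc m) j Y Z + (\<Sum>S\<in>Pk d (Suc m). \<Sum>i\<in>S. Tn d (W a (S-{i}) i (Suc j)) Y Z)"
    by (simp add: sum.distrib Gk_def)
  also have "(\<Sum>S\<in>Pk d (Suc m). \<Sum>i\<in>S. Tn d (W a (S-{i}) i (Suc j)) Y Z)
      = (\<Sum>S\<in>Pk d m. \<Sum>i\<in>{..<d}-S. Tn d (W a (insert i S - {i}) i (Suc j)) Y Z)"
    by (rule reindex)
  also have "\<dots> = Gk d a m (Suc j) Y Z"
    unfolding Gk_def by (intro sum.cong refl) (simp add: insert_Diff_if)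
  finally show ?thesis .
qed

lemma Pk0: "Pk d 0 = {{}}"
  unfolding Pk_def using finite_subset[of _ "{..<d}"] by auto

lemma G_terw: "Gk d a m j \<in> terw d"
proof (induction m arbitrary: j)
  case 0
  show ?case
  proof (rule terw_cong[OF L_all[unfolded L_def mem_Collect_eq, of d "m3pow a j"]])
    fix Y Z show "Dl d (m3pow a j) Y Z = Gk d a 0 j Y Z"
      unfolding Gk_def Dl_def Pk0 by (simp add: W_def loc_def cong: if_cong)
  qed
next
  case (Suc m)
  have e: "ek d a (Suc m) \<in> terw d"
    by (rule terw_cong[OF terw.smult[OF Suc.IH[of 1], where c="1 / of_nat (Suc m)"]])
       (use claimA[of _ a m] in \<open>simp del: of_nat_Suc\<close>)
  show ?case
    by (rule terw_cong[OF terw_lin[OF terw.mult[OF e L_all[unfolded L_def mem_Collect_eq, of d "m3pow a j"]] Suc.IH[of "Suc j"], where a=1 and b="-1"]])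
       (simp add: claimB)
qed

lemma Pkd: "Pk d d = {{..<d}}"
  unfolding Pk_def using card_subset_eq[of "{..<d}"] by auto

theorem lemma5p5:
  fixes d :: nat and M :: "nat \<Rightarrow> nat \<Rightarrow> complex"
  assumes "d \<ge> 1"
  shows "tensor_pow d M \<in> terw d"
proof -
  obtain m where d: "d = Suc m" using assms by (cases d) auto
  have e: "ek d M d \<in> terw d"
    unfolding d
    by (rule terw_cong[OF terw.smult[OF G_terw[of "Suc m" M m 1], where c="1 / of_nat (Suc m)"]])
       (use claimA[of _ M m] in \<open>simp del: of_nat_Suc\<close>)
  show ?thesis
  proof (rule terw_cong[OF e])
    fix Y Z show "ek d M d Y Z = tensor_pow d M Y Z"
      unfolding ek_def Pkd Tn_def tensor_pow_def V_def by simp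
  qed
qed


end
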